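(* Let $(\mathcal{X},\rho)$ be a length space and $\eta:\mathcal{X}\to\mathcal{Y}$ a function. Then for all $r>0$, $V_r^c=(\partial_\eta\mathcal{X})^r$, where $V_r=\{x\in\mathcal{X}:\mathrm{margin}_\eta(x)\ge r\}$.
   Context: A length space: $\rho(x,x')=\inf_\gamma\ell(\gamma)$ over continuous paths from $x$ to $x'$. $\mathrm{margin}_\eta(x)=\inf\{\rho(x,x'):\eta(x')\ne\eta(x)\}$, $\partial_\eta\mathcal{X}=\{x:\mathrm{margin}_\eta(x)=0\}$, and for $A\subset\mathcal{X}$, $A^r=\bigcup_{x\in A}B(x,r)$ with $B(x,r)$ the open ball. *)

theory Defs
  imports "HOL-Analysis.Analysis"
begin

text \<open>Valued in ereal, since paths may have infinite length.\<close>
definition curve_length :: "(real \<Rightarrow> 'a::metric_space) \<Rightarrow> ereal" where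
  "curve_length g = (SUP p \<in> {(n::nat, t::nat \<Rightarrow> real). t 0 = 0 \<and> t n = 1 \<and> (\<forall>i<n. t i \<le> t (Suc i))}.
       ereal (\<Sum>i<fst p. dist (g (snd p i)) (g (snd p (Suc i)))))"

definition length_space :: "'a::metric_space itself \<Rightarrow> bool" where
  "length_space _ \<longleftrightarrow> (\<forall>x y::'a. ereal (dist x y) =
      Inf {curve_length g | g. path g \<and> pathstart g = x \<and> pathfinish g = y})"

text \<open>Margin: distance to the nearest point with a different label (inf of empty set = \<infinity>).\<close>
definition margin :: "('a::metric_space \<Rightarrow> 'b) \<Rightarrow> 'a \<Rightarrow> ereal" where
  "margin eta x = Inf {ereal (dist x x') | x'. eta x' \<noteq> eta x}"

definition decision_boundary :: "('a::metric_space \<Rightarrow> 'b) \<Rightarrow> 'a set" where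
  "decision_boundary eta = {x. margin eta x = 0}"

definition set_expand :: "'a::metric_space set \<Rightarrow> real \<Rightarrow> 'a set" where
  "set_expand A r = (\<Union>x\<in>A. ball x r)"

definition V_set :: "('a::metric_space \<Rightarrow> 'b) \<Rightarrow> real \<Rightarrow> 'a set" where
  "V_set eta r = {x. margin eta x \<ge> ereal r}"

end

theory Submission
  imports Defs
begin

lemma margin_less_iff:
  "margin eta x < ereal r \<longleftrightarrow> (\<exists>x'. eta x' \<noteq> eta x \<and> dist x x' < r)"
proof -
  have "margin eta x < ereal r \<longleftrightarrow> (\<exists>a\<in>{ereal (dist x x') | x'. eta x' \<noteq> eta x}. a < ereal r)"
    unfolding margin_def by (rule Inf_less_iff)
  also have "\<dots> \<longleftrightarrow> (\<exists>x'. eta x' \<noteq> eta x \<and> dist x x' < r)"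
  proof
    assume "\<exists>a\<in>{ereal (dist x x') | x'. eta x' \<noteq> eta x}. a < ereal r"
    then obtain x' where "eta x' \<noteq> eta x" "ereal (dist x x') < ereal r" by blast
    then show "\<exists>x'. eta x' \<noteq> eta x \<and> dist x x' < r" by (intro exI[of _ x']) simp
  next
    assume "\<exists>x'. eta x' \<noteq> eta x \<and> dist x x' < r"
    then obtain x' where "eta x' \<noteq> eta x" "dist x x' < r" by blast
    then show "\<exists>a\<in>{ereal (dist x x') | x'. eta x' \<noteq> eta x}. a < ereal r" by (intro bexI[of _ "ereal (dist x x')"]) auto
  qed
  finally show ?thesis .
qed

lemma margin_zero_iff:
  "margin eta z = 0 \<longleftrightarrow> (\<forall>e>0. \<exists>z'. eta z' \<noteq> eta z \<and> dist z z' < e)"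
proof -
  have ge: "margin eta z \<ge> 0" unfolding margin_def
    by (rule Inf_greatest) (auto simp: zero_ereal_def)
  have "margin eta z = 0 \<longleftrightarrow> (\<forall>e>0. margin eta z < ereal e)"
  proof
    assume H: "\<forall>e>0. margin eta z < ereal e"
    have "margin eta z \<le> 0"
    proof (rule ereal_le_epsilon2)
      fix e :: real assume "0 < e"
      then have "margin eta z < ereal e" using H by blast
      then show "margin eta z \<le> 0 + ereal e" by simp
    qed
    then show "margin eta z = 0" using ge by (rule antisym)
  next
    assume "margin eta z = 0"
    then show "\<forall>e>0. margin eta z < ereal e" by (simp add: zero_ereal_def)
  qed
  then show ?thesis by (simp add: margin_less_iff)
qed

lemma dist_le_length:
  assumes "t \<in> {0..1}"
  shows "ereal (dist (g 0) (g t)) \<le> curve_length g"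
proof -
  define tt where "tt = (\<lambda>i::nat. if i = 0 then 0 else if i = 1 then t else (1::real))"
  have a: "\<forall>i<2. tt i \<le> tt (Suc i)"
  proof (intro allI impI)
    fix i :: nat assume "i < 2"
    then have "i = 0 \<or> i = 1" by linarith
    then show "tt i \<le> tt (Suc i)" using assms by (auto simp: tt_def)
  qed
  have b: "tt 0 = 0" "tt 2 = 1" by (simp_all add: tt_def)
  have mem: "(2::nat, tt) \<in> {(n::nat, t::nat \<Rightarrow> real). t 0 = 0 \<and> t n = 1 \<and> (\<forall>i<n. t i \<le> t (Suc i))}"
    using a b by blast
  have s: "(\<Sum>i<2::nat. dist (g (tt i)) (g (tt (Suc i)))) = dist (g (tt 0)) (g (tt 1)) + dist (g (tt 1)) (g (tt 2))"
    by (simp add: numeral_2_eq_2)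
  have "ereal (dist (g 0) (g t)) \<le> ereal (\<Sum>i<fst (2::nat, tt). dist (g (snd (2::nat, tt) i)) (g (snd (2::nat, tt) (Suc i))))"
    unfolding fst_conv snd_conv s by (simp add: tt_def)
  also have "\<dots> \<le> curve_length g"
    unfolding curve_length_def by (rule SUP_upper[OF mem])
  finally show ?thesis .
qed
lemma boundary_on_path:
  assumes "path g" "eta (g 1) \<noteq> eta (g 0)"
  shows "\<exists>s\<in>{0..1}. margin eta (g s) = 0"
proof -
  define T where "T = {t\<in>{0..1}. eta (g t) \<noteq> eta (g 0)}"
  define s where "s = Inf T"
  have T1: "1 \<in> T" using assms by (auto simp: T_def)
  have bdd: "bdd_below T" by (auto simp: T_def bdd_below_def)
  have s0: "0 \<le> s" unfolding s_def using T1 by (intro cInf_greatest) (auto simp: T_def)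
  have s1: "s \<le> 1" unfolding s_def using T1 bdd by (intro cInf_lower)
  have cont: "continuous_on {0..1} g" using assms(1) by (simp add: path_def)
  have "margin eta (g s) = 0"
    unfolding margin_zero_iff
  proof (intro allI impI)
    fix e :: real assume e: "e > 0"
    have "continuous (at s within {0..1}) g"
      using cont s0 s1 by (simp add: continuous_on_eq_continuous_within)
    from this[unfolded continuous_within_eps_delta, rule_format, OF e]
    obtain d where d: "d > 0" and dd: "\<And>t. t \<in> {0..1} \<Longrightarrow> dist t s < d \<Longrightarrow> dist (g t) (g s) < e"
      by blast
    show "\<exists>z'. eta z' \<noteq> eta (g s) \<and> dist (g s) z' < e"
    proof (cases "eta (g s) = eta (g 0)")
      case True
      have "Inf T < s + d" using d by (simp add: s_def)
      then have "\<exists>t\<in>T. t < s + d" using T1 by (intro cInf_lessD) auto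
      then obtain t where t: "t \<in> T" "t < s + d" by blast
      have "s \<le> t" unfolding s_def using t bdd by (intro cInf_lower)
      then have "dist t s < d" using t by (simp add: dist_real_def)
      then have "dist (g t) (g s) < e" using t dd by (auto simp: T_def)
      then show ?thesis using t True by (auto simp: T_def dist_commute)
    next
      case False
      then have "s \<notin> {0}" by auto
      then have sp: "s > 0" using s0 by auto
      define t where "t = max 0 (s - d/2)"
      have ts: "t < s" "0 \<le> t" using sp d by (auto simp: t_def)
      have "t \<notin> T"
      proof
        assume "t \<in> T" then have "s \<le> t" unfolding s_def using bdd by (intro cInf_lower)
        with ts show False by simp
      qed
      then have "eta (g t) = eta (g 0)" using ts s1 by (auto simp: T_def)
      moreover have "dist t s < d" using ts d by (auto simp: t_def dist_real_def)
      then have "dist (g t) (g s) < e" using ts s1 dd by auto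
      ultimately show ?thesis using False by (metis dist_commute)
    qed
  qed
  then show ?thesis using s0 s1 by auto
qed

theorem lemma13:
  fixes eta :: "'a::metric_space \<Rightarrow> 'b" and r :: real
  assumes "length_space TYPE('a)"
    and "r > 0"
  shows "- V_set eta r = set_expand (decision_boundary eta) r"
proof (rule set_eqI)
  fix x :: 'a
  show "x \<in> - V_set eta r \<longleftrightarrow> x \<in> set_expand (decision_boundary eta) r"
  proof
    assume "x \<in> - V_set eta r"
    then have "margin eta x < ereal r" by (auto simp: V_set_def not_le)
    then obtain x' where x': "eta x' \<noteq> eta x" "dist x x' < r" by (auto simp: margin_less_iff)
    have eq: "Inf {curve_length g | g. path g \<and> pathstart g = x \<and> pathfinish g = x'} = ereal (dist x x')"
    proof -
      have H: "\<forall>x y::'a. ereal (dist x y) =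
          Inf {curve_length g | g. path g \<and> pathstart g = x \<and> pathfinish g = y}"
        using assms(1) unfolding length_space_def .
      show ?thesis using H[rule_format, of x x', symmetric] .
    qed
    have "Inf {curve_length g | g. path g \<and> pathstart g = x \<and> pathfinish g = x'} < ereal r"
      unfolding eq using x'(2) by simp
    then obtain g where g: "path g" "pathstart g = x" "pathfinish g = x'" "curve_length g < ereal r"
      by (auto simp: Inf_less_iff)
    have "eta (g 1) \<noteq> eta (g 0)" using g(2,3) x'(1) by (simp add: pathstart_def pathfinish_def)
    then obtain s where s: "s \<in> {0..1}" "margin eta (g s) = 0"
      using boundary_on_path[OF g(1)] by blast
    have "ereal (dist x (g s)) < ereal r"
      using le_less_trans[OF dist_le_length[OF s(1), of g] g(4)] g(2) by (simp add: pathstart_def)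
    then have "x \<in> ball (g s) r" by (simp add: dist_commute)
    moreover have "g s \<in> decision_boundary eta" using s(2) by (simp add: decision_boundary_def)
    ultimately show "x \<in> set_expand (decision_boundary eta) r"
      unfolding set_expand_def by (rule UN_I[rotated])
  next
    assume "x \<in> set_expand (decision_boundary eta) r"
    then obtain z where z: "margin eta z = 0" "dist z x < r"
      by (auto simp: set_expand_def decision_boundary_def)
    have "\<exists>x'. eta x' \<noteq> eta x \<and> dist x x' < r"
    proof (cases "eta z = eta x")
      case True
      obtain z' where "eta z' \<noteq> eta z" "dist z z' < r - dist z x"
      proof -
        have "r - dist z x > 0" using z(2) by simp
        then show ?thesis using that z(1) margin_zero_iff[of eta z] by blast
      qed
      moreover have "dist x z' \<le> dist z x + dist z z'" by (metis dist_commute dist_triangle)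
      ultimately show ?thesis using True by (intro exI[of _ z']) auto
    next
      case False
      then show ?thesis using z by (auto simp: dist_commute)
    qed
    then have "margin eta x < ereal r" by (simp add: margin_less_iff)
    then show "x \<in> - V_set eta r" by (auto simp: V_set_def not_le)
  qed
qed

end
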